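(* For the biased batched SVRG (Algorithm 3), $$b_j\,\mathbb{E}\langle e_j,\tilde x_j-\tilde x_{j-1}\rangle=-\eta_j(1-\lambda)B_j\,\mathbb{E}\langle e_j,\nabla f(\tilde x_j)\rangle-\eta_jB_j\,\mathbb{E}\|e_j\|^2.$$
   Context: Setting: $f(x)=\frac1n\sum_{i=1}^n f_i(x)$ with each $f_i:\mathbb{R}^d\to\mathbb{R}$ differentiable and $L$-smooth. For $\mathcal I\subset\{1,\dots,n\}$, $\nabla f_{\mathcal I}(x)=\frac1{|\mathcal I|}\sum_{i\in\mathcal I}\nabla f_i(x)$. $N\sim\mathrm{Geom}(\gamma')$ means $P(N=k)=(1-\gamma')\gamma'^k$, $k\ge0$. Epoch $j$ of the batched SVRG scheme: $\mathcal I_j$ uniformly random of size $B_j$, $g_j=\nabla f_{\mathcal I_j}(\tilde x_{j-1})$, $x^{(j)}_0=\tilde x_{j-1}$; $N_j\sim\mathrm{Geom}(B_j/(B_j+b_j))$ drawn independently (mean $B_j/b_j$); for $k=0,\dots,N_j-1$, $\tilde{\mathcal I}_k$ uniformly random of size $b_j$ and $x^{(j)}_{k+1}=x^{(j)}_k-\eta_jv^{(j)}_k$; $\tilde x_j=x^{(j)}_{N_j}$. Algorithm 3 (biased, $0<\lambda<1$): $v^{(j)}_k=(1-\lambda)(\nabla f_{\tilde{\mathcal I}_k}(x^{(j)}_k)-\nabla f_{\tilde{\mathcal I}_k}(x^{(j)}_0))+\lambda g_j$, and $e_j=\lambda\nabla f_{\mathcal I_j}(\tilde x_{j-1})-(1-\lambda)\nabla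 f(\tilde x_{j-1})$. $\mathbb{E}$ is expectation over all randomness. *)

theory Defs
  imports "HOL-Probability.Probability"
begin

definition batch_grad :: "(nat \<Rightarrow> 'a::real_vector \<Rightarrow> 'a) \<Rightarrow> nat set \<Rightarrow> 'a \<Rightarrow> 'a" where
  "batch_grad G I x = (1 / real (card I)) *\<^sub>R (\<Sum>i\<in>I. G i x)"

definition unif_subset :: "nat \<Rightarrow> nat \<Rightarrow> nat set pmf" where
  "unif_subset n m = pmf_of_set {S. S \<subseteq> {1..n} \<and> card S = m}"

definition alg3_dir :: "(nat \<Rightarrow> 'a::real_vector \<Rightarrow> 'a) \<Rightarrow> real \<Rightarrow> 'a \<Rightarrow> 'a \<Rightarrow> nat set \<Rightarrow> 'a \<Rightarrow> 'a" where
  "alg3_dir G lam g x0 S x = (1 - lam) *\<^sub>R (batch_grad G S x - batch_grad G S x0) + lam *\<^sub>R g"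

fun alg3_inner :: "(nat \<Rightarrow> 'a::real_vector \<Rightarrow> 'a) \<Rightarrow> nat \<Rightarrow> nat \<Rightarrow> real \<Rightarrow> real \<Rightarrow> 'a \<Rightarrow> 'a
     \<Rightarrow> nat \<Rightarrow> 'a \<Rightarrow> 'a pmf" where
  "alg3_inner G n b eta lam g x0 0 x = return_pmf x"
| "alg3_inner G n b eta lam g x0 (Suc k) x =
     do { S \<leftarrow> unif_subset n b;
          alg3_inner G n b eta lam g x0 k (x - eta *\<^sub>R alg3_dir G lam g x0 S x) }"

text \<open>One epoch j of Algorithm 3, with x~_{j-1} distributed according to p.
  Returns the joint distribution of (x~_{j-1}, I_j, x~_j).
  N_j ~ Geom(B/(B+b)), i.e. P(N = k) = (1 - B/(B+b)) (B/(B+b))^k, which is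
  geometric_pmf (b/(B+b)) in Isabelle's convention P(N = k) = (1-q)^k q.\<close>
definition alg3_epoch :: "(nat \<Rightarrow> 'a::real_vector \<Rightarrow> 'a) \<Rightarrow> nat \<Rightarrow> nat \<Rightarrow> nat \<Rightarrow> real \<Rightarrow> real
     \<Rightarrow> 'a pmf \<Rightarrow> ('a \<times> nat set \<times> 'a) pmf" where
  "alg3_epoch G n B b eta lam p =
     do { x0 \<leftarrow> p;
          I \<leftarrow> unif_subset n B;
          N \<leftarrow> geometric_pmf (real b / (real B + real b));
          xN \<leftarrow> alg3_inner G n b eta lam (batch_grad G I x0) x0 N x0;
          return_pmf (x0, I, xN) }"

definition alg3_err :: "(nat \<Rightarrow> 'a::real_vector \<Rightarrow> 'a) \<Rightarrow> nat \<Rightarrow> real \<Rightarrow> nat set \<Rightarrow> 'a \<Rightarrow> 'a" where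
  "alg3_err G n lam I x0 = lam *\<^sub>R batch_grad G I x0 - (1 - lam) *\<^sub>R batch_grad G {1..n} x0"

end

theory Submission
  imports Defs
begin


lemma bind_pmf_integrable_parts:
  fixes f :: "'b \<Rightarrow> real"
  assumes int: "integrable (measure_pmf (bind_pmf M N)) f"
  shows "\<forall>x\<in>set_pmf M. integrable (measure_pmf (N x)) f"
    and "integrable (measure_pmf M) (\<lambda>x. \<integral>y. f y \<partial>N x)"
proof -
  have fin: "(\<integral>\<^sup>+x. \<integral>\<^sup>+y. ennreal (norm (f y)) \<partial>N x \<partial>M) < \<infinity>"
    using int by (simp add: integrable_iff_bounded)
  have ae: "AE x in M. (\<integral>\<^sup>+y. ennreal (norm (f y)) \<partial>N x) \<noteq> \<infinity>"
    by (rule nn_integral_PInf_AE) (use fin in auto)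
  show 1: "\<forall>x\<in>set_pmf M. integrable (measure_pmf (N x)) f"
    using ae by (auto simp: AE_measure_pmf_iff integrable_iff_bounded less_top)
  have "(\<integral>\<^sup>+x. ennreal (norm (\<integral>y. f y \<partial>N x)) \<partial>M) \<le> (\<integral>\<^sup>+x. \<integral>\<^sup>+y. ennreal (norm (f y)) \<partial>N x \<partial>M)"
  proof (rule nn_integral_mono_AE)
    show "AE x in M. ennreal (norm (\<integral>y. f y \<partial>N x)) \<le> (\<integral>\<^sup>+y. ennreal (norm (f y)) \<partial>N x)"
    proof (unfold AE_measure_pmf_iff, intro ballI)
      fix x assume x: "x \<in> set_pmf M"
      have i: "integrable (N x) f" using 1 x by auto
      have "(\<integral>\<^sup>+y. ennreal (norm (f y)) \<partial>N x) = ennreal (\<integral>y. norm (f y) \<partial>N x)"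
        by (rule nn_integral_eq_integral) (use i in auto)
      moreover have "norm (\<integral>y. f y \<partial>N x) \<le> (\<integral>y. norm (f y) \<partial>N x)"
        by (rule integral_norm_bound)
      ultimately show "ennreal (norm (\<integral>y. f y \<partial>N x)) \<le> (\<integral>\<^sup>+y. ennreal (norm (f y)) \<partial>N x)"
        by (simp add: ennreal_leI)
    qed
  qed
  then show "integrable (measure_pmf M) (\<lambda>x. \<integral>y. f y \<partial>N x)"
    using fin by (auto simp: integrable_iff_bounded)
qed

lemma bind_pmf_integral_nonneg:
  fixes f :: "'b \<Rightarrow> real"
  assumes int: "integrable (measure_pmf (bind_pmf M N)) f" and nn: "\<And>y. 0 \<le> f y"
  shows "(\<integral>y. f y \<partial>bind_pmf M N) = (\<integral>x. \<integral>y. f y \<partial>N x \<partial>M)"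
proof -
  note P = bind_pmf_integrable_parts[OF int]
  have "ennreal (\<integral>y. f y \<partial>bind_pmf M N) = (\<integral>\<^sup>+y. ennreal (f y) \<partial>bind_pmf M N)"
    by (rule nn_integral_eq_integral[symmetric]) (use int nn in auto)
  also have "\<dots> = (\<integral>\<^sup>+x. \<integral>\<^sup>+y. ennreal (f y) \<partial>N x \<partial>M)" by simp
  also have "\<dots> = (\<integral>\<^sup>+x. ennreal (\<integral>y. f y \<partial>N x) \<partial>M)"
    using P(1) by (intro nn_integral_cong_AE) (auto simp: AE_measure_pmf_iff nn intro!: nn_integral_eq_integral)
  also have "\<dots> = ennreal (\<integral>x. \<integral>y. f y \<partial>N x \<partial>M)"
    by (rule nn_integral_eq_integral) (use P(2) nn in \<open>auto intro: integral_nonneg\<close>)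
  finally show ?thesis
    by (subst (asm) ennreal_inj) (auto intro!: integral_nonneg integral_nonneg_AE nn)
qed

lemma bind_pmf_integral:
  fixes f :: "'b \<Rightarrow> real"
  assumes int: "integrable (measure_pmf (bind_pmf M N)) f"
  shows "(\<integral>y. f y \<partial>bind_pmf M N) = (\<integral>x. \<integral>y. f y \<partial>N x \<partial>M)"
proof -
  have ip: "integrable (bind_pmf M N) (\<lambda>y. max (f y) 0)" and im: "integrable (bind_pmf M N) (\<lambda>y. max (- f y) 0)"
    using int by auto
  note Pp = bind_pmf_integrable_parts[OF ip] and Pm = bind_pmf_integrable_parts[OF im]
  have fe: "\<And>y. f y = max (f y) 0 - max (- f y) 0" by auto
  have "(\<integral>y. f y \<partial>bind_pmf M N) = (\<integral>y. max (f y) 0 \<partial>bind_pmf M N) - (\<integral>y. max (- f y) 0 \<partial>bind_pmf M N)"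
    by (subst fe) (rule Bochner_Integration.integral_diff[OF ip im])
  also have "\<dots> = (\<integral>x. \<integral>y. max (f y) 0 \<partial>N x \<partial>M) - (\<integral>x. \<integral>y. max (- f y) 0 \<partial>N x \<partial>M)"
    by (simp add: bind_pmf_integral_nonneg[OF ip] bind_pmf_integral_nonneg[OF im])
  also have "\<dots> = (\<integral>x. (\<integral>y. max (f y) 0 \<partial>N x) - (\<integral>y. max (- f y) 0 \<partial>N x) \<partial>M)"
    by (rule Bochner_Integration.integral_diff[symmetric, OF Pp(2) Pm(2)])
  also have "\<dots> = (\<integral>x. \<integral>y. f y \<partial>N x \<partial>M)"
  proof (rule integral_cong_AE)
    show "AE x in M. (\<integral>y. max (f y) 0 \<partial>N x) - (\<integral>y. max (- f y) 0 \<partial>N x) = (\<integral>y. f y \<partial>N x)"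
      unfolding AE_measure_pmf_iff
    proof
      fix x assume x: "x \<in> set_pmf M"
      show "(\<integral>y. max (f y) 0 \<partial>N x) - (\<integral>y. max (- f y) 0 \<partial>N x) = (\<integral>y. f y \<partial>N x)"
        using Pp(1) Pm(1) x by (subst (3) fe, subst Bochner_Integration.integral_diff) auto
    qed
  qed auto
  finally show ?thesis .
qed



lemma card_subsets_containing:
  fixes A :: "nat set"
  assumes "finite A" "i \<in> A" "0 < k"
  shows "card {S. S \<subseteq> A \<and> card S = k \<and> i \<in> S} = (card A - 1) choose (k - 1)"
proof -
  have "bij_betw (insert i) {T. T \<subseteq> A - {i} \<and> card T = k - 1} {S. S \<subseteq> A \<and> card S = k \<and> i \<in> S}"
  proof (rule bij_betw_byWitness[where f'="\<lambda>S. S - {i}"])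
    show "\<forall>T\<in>{T. T \<subseteq> A - {i} \<and> card T = k - 1}. insert i T - {i} = T" by auto
    show "\<forall>S\<in>{S. S \<subseteq> A \<and> card S = k \<and> i \<in> S}. insert i (S - {i}) = S" by auto
    show "insert i ` {T. T \<subseteq> A - {i} \<and> card T = k - 1} \<subseteq> {S. S \<subseteq> A \<and> card S = k \<and> i \<in> S}"
    proof
      fix S assume "S \<in> insert i ` {T. T \<subseteq> A - {i} \<and> card T = k - 1}"
      then obtain T where T: "T \<subseteq> A - {i}" "card T = k - 1" "S = insert i T" by auto
      have "finite T" using T(1) assms(1) finite_subset by blast
      moreover have "i \<notin> T" using T(1) by auto
      ultimately show "S \<in> {S. S \<subseteq> A \<and> card S = k \<and> i \<in> S}" using T assms by auto
    qed
    show "(\<lambda>S. S - {i}) ` {S. S \<subseteq> A \<and> card S = k \<and> i \<in> S} \<subseteq> {T. T \<subseteq> A - {i} \<and> card T = k - 1}"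
    proof
      fix T assume "T \<in> (\<lambda>S. S - {i}) ` {S. S \<subseteq> A \<and> card S = k \<and> i \<in> S}"
      then obtain S where S: "S \<subseteq> A" "card S = k" "i \<in> S" "T = S - {i}" by auto
      have "finite S" using S(1) assms(1) finite_subset by blast
      then show "T \<in> {T. T \<subseteq> A - {i} \<and> card T = k - 1}" using S by auto
    qed
  qed
  then have "card {S. S \<subseteq> A \<and> card S = k \<and> i \<in> S} = card {T. T \<subseteq> A - {i} \<and> card T = k - 1}"
    by (simp add: bij_betw_same_card)
  also have "\<dots> = card (A - {i}) choose (k - 1)" by (rule n_subsets) (use assms in auto)
  finally show ?thesis using assms by simp
qed

lemma sum_subsets_sum:
  fixes w :: "nat \<Rightarrow> real"
  assumes "finite A" "0 < k"
  shows "(\<Sum>S\<in>{S. S \<subseteq> A \<and> card S = k}. \<Sum>i\<in>S. w i) = real ((card A - 1) choose (k - 1)) * (\<Sum>i\<in>A. w i)"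
proof -
  let ?F = "{S. S \<subseteq> A \<and> card S = k}"
  have fF: "finite ?F" using assms(1) by auto
  have "(\<Sum>S\<in>?F. \<Sum>i\<in>S. w i) = (\<Sum>S\<in>?F. \<Sum>i\<in>A. if i \<in> S then w i else 0)"
  proof (rule sum.cong[OF refl])
    fix S assume "S \<in> ?F"
    then have "A \<inter> S = S" by auto
    then show "(\<Sum>i\<in>S. w i) = (\<Sum>i\<in>A. if i \<in> S then w i else 0)"
      using sum.inter_restrict[OF assms(1), of w S] by simp
  qed
  also have "\<dots> = (\<Sum>i\<in>A. \<Sum>S\<in>?F. if i \<in> S then w i else 0)" by (rule sum.swap)
  also have "\<dots> = (\<Sum>i\<in>A. real (card {S\<in>?F. i \<in> S}) * w i)"
    by (rule sum.cong[OF refl]) (simp add: sum.If_cases fF Int_def conj_ac)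
  also have "\<dots> = (\<Sum>i\<in>A. real ((card A - 1) choose (k - 1)) * w i)"
  proof (intro sum.cong refl)
    fix i assume "i \<in> A"
    have "{S\<in>?F. i \<in> S} = {S. S \<subseteq> A \<and> card S = k \<and> i \<in> S}" by auto
    then show "real (card {S\<in>?F. i \<in> S}) * w i = real ((card A - 1) choose (k - 1)) * w i"
      using card_subsets_containing[OF assms(1) \<open>i\<in>A\<close> assms(2)] by simp
  qed
  finally show ?thesis by (simp add: sum_distrib_left)
qed

lemma expect_batch_grad:
  fixes G :: "nat \<Rightarrow> 'a::real_inner \<Rightarrow> 'a"
  assumes "0 < b" "b \<le> n"
  shows "measure_pmf.expectation (unif_subset n b) (\<lambda>S. inner e (batch_grad G S y))
         = inner e (batch_grad G {1..n} y)"
proof -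
  let ?F = "{S. S \<subseteq> {1..n} \<and> card S = b}"
  have cF: "card ?F = n choose b" using n_subsets[of "{1..n}" b] by simp
  have fF: "finite ?F" by auto
  have ne: "?F \<noteq> {}" using cF assms by (metis card.empty zero_less_binomial_iff less_irrefl_nat)
  have cpos: "0 < n choose b" using assms by simp
  have key: "real b * real (n choose b) = real n * real ((n - 1) choose (b - 1))"
    using times_binomial_minus1_eq[of b n] assms by (metis of_nat_mult)
  have "measure_pmf.expectation (unif_subset n b) (\<lambda>S. inner e (batch_grad G S y))
     = (\<Sum>S\<in>?F. inner e (batch_grad G S y)) / card ?F"
    unfolding unif_subset_def by (rule integral_pmf_of_set[OF ne fF])
  also have "(\<Sum>S\<in>?F. inner e (batch_grad G S y)) = (\<Sum>S\<in>?F. (1 / real b) * (\<Sum>i\<in>S. inner e (G i y)))"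
    by (intro sum.cong refl) (auto simp: batch_grad_def inner_sum_right)
  also have "\<dots> = (1 / real b) * (real ((n - 1) choose (b - 1)) * (\<Sum>i\<in>{1..n}. inner e (G i y)))"
    using sum_subsets_sum[of "{1..n}" b "\<lambda>i. inner e (G i y)"] assms by (simp add: sum_divide_distrib[symmetric])
  finally have "measure_pmf.expectation (unif_subset n b) (\<lambda>S. inner e (batch_grad G S y))
     = (1 / real b) * (real ((n - 1) choose (b - 1)) * (\<Sum>i\<in>{1..n}. inner e (G i y))) / real (n choose b)"
    by (simp only: cF)
  also have "\<dots> = (\<Sum>i\<in>{1..n}. inner e (G i y)) / real n"
    using key cpos assms by (simp add: field_simps)
  finally show ?thesis by (simp add: batch_grad_def inner_sum_right)
qed



lemma inner_snoc:
  "alg3_inner G n b eta lam g x0 (Suc k) y =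
   bind_pmf (alg3_inner G n b eta lam g x0 k y)
     (\<lambda>z. map_pmf (\<lambda>S. z - eta *\<^sub>R alg3_dir G lam g x0 S z) (unif_subset n b))"
proof (induction k arbitrary: y)
  case 0
  then show ?case by (simp add: bind_return_pmf map_pmf_def)
next
  case (Suc k)
  have "alg3_inner G n b eta lam g x0 (Suc (Suc k)) y =
    bind_pmf (unif_subset n b) (\<lambda>S. alg3_inner G n b eta lam g x0 (Suc k) (y - eta *\<^sub>R alg3_dir G lam g x0 S y))"
    by simp
  also have "\<dots> = bind_pmf (unif_subset n b) (\<lambda>S. bind_pmf (alg3_inner G n b eta lam g x0 k (y - eta *\<^sub>R alg3_dir G lam g x0 S y))
     (\<lambda>z. map_pmf (\<lambda>S. z - eta *\<^sub>R alg3_dir G lam g x0 S z) (unif_subset n b)))"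
    by (simp only: Suc.IH)
  also have "\<dots> = bind_pmf (bind_pmf (unif_subset n b) (\<lambda>S. alg3_inner G n b eta lam g x0 k (y - eta *\<^sub>R alg3_dir G lam g x0 S y)))
     (\<lambda>z. map_pmf (\<lambda>S. z - eta *\<^sub>R alg3_dir G lam g x0 S z) (unif_subset n b))"
    by (simp only: bind_assoc_pmf)
  also have "\<dots> = bind_pmf (alg3_inner G n b eta lam g x0 (Suc k) y)
     (\<lambda>z. map_pmf (\<lambda>S. z - eta *\<^sub>R alg3_dir G lam g x0 S z) (unif_subset n b))"
    by simp
  finally show ?case .
qed

lemma fin_unif: assumes "b \<le> n" shows "finite (set_pmf (unif_subset n b))"
proof -
  let ?F = "{S. S \<subseteq> {1..n} \<and> card S = b}"
  have cF: "card ?F = n choose b" using n_subsets[of "{1..n}" b] by simp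
  have fF: "finite ?F" by auto
  have ne: "?F \<noteq> {}" using cF assms by (metis card.empty zero_less_binomial_iff less_irrefl_nat)
  show ?thesis unfolding unif_subset_def using fF ne by simp
qed

lemma expect_step:
  fixes G :: "nat \<Rightarrow> 'a::real_inner \<Rightarrow> 'a"
  assumes "0 < b" "b \<le> n"
  shows "(\<integral>S. inner e (z - eta *\<^sub>R alg3_dir G lam g x0 S z - x0) \<partial>unif_subset n b)
    = inner e (z - x0) - eta * ((1-lam) * (inner e (batch_grad G {1..n} z) - inner e (batch_grad G {1..n} x0)) + lam * inner e g)"
proof -
  note I = integrable_measure_pmf_finite[OF fin_unif[OF assms(2)]]
  have "(\<integral>S. inner e (z - eta *\<^sub>R alg3_dir G lam g x0 S z - x0) \<partial>unif_subset n b)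
     = (\<integral>S. inner e (z - x0) - eta * ((1-lam) * (inner e (batch_grad G S z) - inner e (batch_grad G S x0)) + lam * inner e g) \<partial>unif_subset n b)"
    by (intro Bochner_Integration.integral_cong refl) (simp add: alg3_dir_def inner_diff_right inner_add_right algebra_simps)
  also have "\<dots> = inner e (z - x0) - eta * ((1-lam) * ((\<integral>S. inner e (batch_grad G S z) \<partial>unif_subset n b) - (\<integral>S. inner e (batch_grad G S x0) \<partial>unif_subset n b)) + lam * inner e g)"
    by (simp add: I)
  also have "\<dots> = inner e (z - x0) - eta * ((1-lam) * (inner e (batch_grad G {1..n} z) - inner e (batch_grad G {1..n} x0)) + lam * inner e g)"
    using assms by (simp add: expect_batch_grad)
  finally show ?thesis .
qed



lemma core:
  fixes G :: "nat \<Rightarrow> 'a::real_inner \<Rightarrow> 'a"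
  assumes B0: "0 < B" and b0: "0 < b" and bn: "b \<le> n"
    and i1: "integrable (measure_pmf (bind_pmf (geometric_pmf (real b / (real B + real b)))
               (\<lambda>N. alg3_inner G n b eta lam g x0 N x0))) (\<lambda>x. inner e (x - x0))"
    and i2: "integrable (measure_pmf (bind_pmf (geometric_pmf (real b / (real B + real b)))
               (\<lambda>N. alg3_inner G n b eta lam g x0 N x0))) (\<lambda>x. inner e (batch_grad G {1..n} x))"
  shows "real b * (\<integral>x. inner e (x - x0) \<partial>bind_pmf (geometric_pmf (real b / (real B + real b)))
               (\<lambda>N. alg3_inner G n b eta lam g x0 N x0))
    = - eta * real B * (\<integral>x. (1-lam) * (inner e (batch_grad G {1..n} x) - inner e (batch_grad G {1..n} x0)) + lam * inner e g
         \<partial>bind_pmf (geometric_pmf (real b / (real B + real b))) (\<lambda>N. alg3_inner G n b eta lam g x0 N x0))"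
proof -
  define q where "q = real b / (real B + real b)"
  define \<mu> where "\<mu> = bind_pmf (geometric_pmf q) (\<lambda>N. alg3_inner G n b eta lam g x0 N x0)"
  define \<nu> where "\<nu> = bind_pmf (geometric_pmf q) (\<lambda>N. alg3_inner G n b eta lam g x0 (Suc N) x0)"
  define \<phi> where "\<phi> = (\<lambda>x. inner e (x - x0))"
  define h where "h = (\<lambda>x. (1-lam) * (inner e (batch_grad G {1..n} x) - inner e (batch_grad G {1..n} x0)) + lam * inner e g)"
  have q0: "0 < q" and q1: "q < 1" using B0 b0 by (auto simp: q_def field_simps)
  have i1': "integrable \<mu> \<phi>" using i1 by (simp add: \<mu>_def q_def \<phi>_def)
  have i2': "integrable \<mu> (\<lambda>x. inner e (batch_grad G {1..n} x))" using i2 by (simp add: \<mu>_def q_def)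
  have ih: "integrable \<mu> h" unfolding h_def using i2' by auto
  have mu_eq: "\<mu> = bind_pmf (bernoulli_pmf q) (\<lambda>c. if c then return_pmf x0 else \<nu>)"
    unfolding \<mu>_def \<nu>_def
    apply (subst geometric_bind_pmf_unfold)
    using q0 q1 apply simp
    apply (simp add: bind_assoc_pmf)
    apply (rule bind_pmf_cong[OF refl])
    apply (auto simp: bind_return_pmf bind_map_pmf)
    done
  have nu_eq: "\<nu> = bind_pmf \<mu> (\<lambda>z. map_pmf (\<lambda>S. z - eta *\<^sub>R alg3_dir G lam g x0 S z) (unif_subset n b))"
    unfolding \<nu>_def \<mu>_def by (simp only: inner_snoc bind_assoc_pmf)
  have ib: "integrable (bind_pmf (bernoulli_pmf q) (\<lambda>c. if c then return_pmf x0 else \<nu>)) \<phi>"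
    using i1' mu_eq by simp
  have inu: "integrable \<nu> \<phi>"
    using bind_pmf_integrable_parts(1)[OF ib] q0 q1 by (metis UNIV_I set_pmf_bernoulli)
  have E1: "(\<integral>x. \<phi> x \<partial>\<mu>) = q * \<phi> x0 + (1 - q) * (\<integral>x. \<phi> x \<partial>\<nu>)"
    using q0 q1 by (subst mu_eq, subst bind_pmf_integral[OF ib]) simp
  have inu2: "integrable (bind_pmf \<mu> (\<lambda>z. map_pmf (\<lambda>S. z - eta *\<^sub>R alg3_dir G lam g x0 S z) (unif_subset n b))) \<phi>"
    using inu nu_eq by simp
  have "(\<integral>x. \<phi> x \<partial>\<nu>) = (\<integral>z. (\<integral>y. \<phi> y \<partial>map_pmf (\<lambda>S. z - eta *\<^sub>R alg3_dir G lam g x0 S z) (unif_subset n b)) \<partial>\<mu>)"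
    by (subst nu_eq, rule bind_pmf_integral[OF inu2])
  also have "\<dots> = (\<integral>z. \<phi> z - eta * h z \<partial>\<mu>)"
    by (intro Bochner_Integration.integral_cong refl)
       (simp add: \<phi>_def h_def expect_step[OF b0 bn])
  also have "\<dots> = (\<integral>z. \<phi> z \<partial>\<mu>) - eta * (\<integral>z. h z \<partial>\<mu>)"
    using i1' ih by simp
  finally have E2: "(\<integral>x. \<phi> x \<partial>\<nu>) = (\<integral>z. \<phi> z \<partial>\<mu>) - eta * (\<integral>z. h z \<partial>\<mu>)" .
  have p0: "\<phi> x0 = 0" by (simp add: \<phi>_def)
  have "q * (\<integral>z. \<phi> z \<partial>\<mu>) = - (1 - q) * eta * (\<integral>z. h z \<partial>\<mu>)"
    using E1 E2 p0 by (simp add: algebra_simps)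
  then have "(real B + real b) * (real b * (\<integral>z. \<phi> z \<partial>\<mu>) + real B * eta * (\<integral>z. h z \<partial>\<mu>)) = 0"
    using B0 b0 unfolding q_def by (simp add: field_simps)
  then have "real b * (\<integral>z. \<phi> z \<partial>\<mu>) = - real B * eta * (\<integral>z. h z \<partial>\<mu>)"
    using B0 b0 by simp
  then show ?thesis by (simp add: \<mu>_def q_def \<phi>_def h_def)
qed



lemma two_level:
  fixes F :: "'x \<times> 'i \<times> 'y \<Rightarrow> real"
  assumes int: "integrable (measure_pmf (bind_pmf p (\<lambda>x0. bind_pmf U (\<lambda>I. map_pmf (\<lambda>x. (x0, I, x)) (M x0 I))))) F"
  shows "(\<integral>z. F z \<partial>bind_pmf p (\<lambda>x0. bind_pmf U (\<lambda>I. map_pmf (\<lambda>x. (x0, I, x)) (M x0 I))))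
           = (\<integral>x0. (\<integral>I. (\<integral>x. F (x0, I, x) \<partial>M x0 I) \<partial>U) \<partial>p)"
    and "integrable (measure_pmf p) (\<lambda>x0. (\<integral>I. (\<integral>x. F (x0, I, x) \<partial>M x0 I) \<partial>U))"
    and "\<forall>x0\<in>set_pmf p. \<forall>I\<in>set_pmf U. integrable (measure_pmf (M x0 I)) (\<lambda>x. F (x0, I, x))"
proof -
  note P1 = bind_pmf_integrable_parts[OF int]
  have P2: "\<forall>x0\<in>set_pmf p. \<forall>I\<in>set_pmf U. integrable (measure_pmf (map_pmf (\<lambda>x. (x0, I, x)) (M x0 I))) F"
    using P1(1) bind_pmf_integrable_parts(1) by blast
  then show "\<forall>x0\<in>set_pmf p. \<forall>I\<in>set_pmf U. integrable (measure_pmf (M x0 I)) (\<lambda>x. F (x0, I, x))"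
    by simp
  have eq: "\<forall>x0\<in>set_pmf p. (\<integral>z. F z \<partial>bind_pmf U (\<lambda>I. map_pmf (\<lambda>x. (x0, I, x)) (M x0 I)))
       = (\<integral>I. (\<integral>x. F (x0, I, x) \<partial>M x0 I) \<partial>U)"
    using P1(1) by (auto simp: bind_pmf_integral)
  show "integrable (measure_pmf p) (\<lambda>x0. (\<integral>I. (\<integral>x. F (x0, I, x) \<partial>M x0 I) \<partial>U))"
    by (rule integrable_cong_AE_imp[OF P1(2)]) (use eq in \<open>auto simp: AE_measure_pmf_iff\<close>)
  show "(\<integral>z. F z \<partial>bind_pmf p (\<lambda>x0. bind_pmf U (\<lambda>I. map_pmf (\<lambda>x. (x0, I, x)) (M x0 I))))
           = (\<integral>x0. (\<integral>I. (\<integral>x. F (x0, I, x) \<partial>M x0 I) \<partial>U) \<partial>p)"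
    by (subst bind_pmf_integral[OF int], rule integral_cong_AE) (use eq in \<open>auto simp: AE_measure_pmf_iff\<close>)
qed



theorem lemmaB10:
  fixes f :: "nat \<Rightarrow> 'a::euclidean_space \<Rightarrow> real"
    and G :: "nat \<Rightarrow> 'a \<Rightarrow> 'a"
    and n B b :: nat and L eta lam :: real
    and p :: "'a pmf"
  assumes grad: "\<And>i x. i \<in> {1..n} \<Longrightarrow> GDERIV (f i) x :> G i x"
    and smooth: "\<And>i x y. i \<in> {1..n} \<Longrightarrow> norm (G i x - G i y) \<le> L * norm (x - y)"
    and B: "0 < B" "B \<le> n" and b: "0 < b" "b \<le> n"
    and lam: "0 < lam" "lam < 1"
    and int1: "integrable (measure_pmf (alg3_epoch G n B b eta lam p))
                 (\<lambda>(x0, I, x). inner (alg3_err G n lam I x0) (x - x0))"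
    and int2: "integrable (measure_pmf (alg3_epoch G n B b eta lam p))
                 (\<lambda>(x0, I, x). inner (alg3_err G n lam I x0) (batch_grad G {1..n} x))"
    and int3: "integrable (measure_pmf (alg3_epoch G n B b eta lam p))
                 (\<lambda>(x0, I, x). (norm (alg3_err G n lam I x0))\<^sup>2)"
  shows "real b * measure_pmf.expectation (alg3_epoch G n B b eta lam p)
            (\<lambda>(x0, I, x). inner (alg3_err G n lam I x0) (x - x0))
         = - eta * (1 - lam) * real B * measure_pmf.expectation (alg3_epoch G n B b eta lam p)
            (\<lambda>(x0, I, x). inner (alg3_err G n lam I x0) (batch_grad G {1..n} x))
           - eta * real B * measure_pmf.expectation (alg3_epoch G n B b eta lam p)
            (\<lambda>(x0, I, x). (norm (alg3_err G n lam I x0))\<^sup>2)"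
proof -
  define U where "U = unif_subset n B"
  define M where "M = (\<lambda>x0 I. bind_pmf (geometric_pmf (real b / (real B + real b)))
               (\<lambda>N. alg3_inner G n b eta lam (batch_grad G I x0) x0 N x0))"
  have ep: "alg3_epoch G n B b eta lam p = bind_pmf p (\<lambda>x0. bind_pmf U (\<lambda>I. map_pmf (\<lambda>x. (x0, I, x)) (M x0 I)))"
    by (simp add: alg3_epoch_def M_def U_def map_pmf_def bind_assoc_pmf bind_return_pmf)
  define A1 where "A1 = (\<lambda>x0 I. \<integral>x. inner (alg3_err G n lam I x0) (x - x0) \<partial>M x0 I)"
  define A2 where "A2 = (\<lambda>x0 I. \<integral>x. inner (alg3_err G n lam I x0) (batch_grad G {1..n} x) \<partial>M x0 I)"
  define A3 where "A3 = (\<lambda>x0 I. (norm (alg3_err G n lam I x0))\<^sup>2)"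
  note T1 = two_level[OF int1[unfolded ep]] and T2 = two_level[OF int2[unfolded ep]]
    and T3 = two_level[OF int3[unfolded ep]]
  have pw: "real b * A1 x0 I = - eta * (1 - lam) * real B * A2 x0 I - eta * real B * A3 x0 I"
    if x0: "x0 \<in> set_pmf p" and I: "I \<in> set_pmf U" for x0 I
  proof -
    define e where "e = alg3_err G n lam I x0"
    define g where "g = batch_grad G I x0"
    have j1: "integrable (M x0 I) (\<lambda>x. inner e (x - x0))"
      using T1(3) x0 I by (simp add: e_def)
    have j2: "integrable (M x0 I) (\<lambda>x. inner e (batch_grad G {1..n} x))"
      using T2(3) x0 I by (simp add: e_def)
    have c: "real b * A1 x0 I = - eta * real B * (\<integral>x. (1-lam) * (inner e (batch_grad G {1..n} x) - inner e (batch_grad G {1..n} x0)) + lam * inner e g \<partial>M x0 I)"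
      using core[OF B(1) b, of G eta lam g x0 e] j1 j2 unfolding A1_def M_def e_def g_def by simp
    have ee: "lam * inner e g - (1 - lam) * inner e (batch_grad G {1..n} x0) = (norm e)\<^sup>2"
      by (simp add: e_def g_def alg3_err_def power2_norm_eq_inner inner_diff_right)
    have "(\<integral>x. (1-lam) * (inner e (batch_grad G {1..n} x) - inner e (batch_grad G {1..n} x0)) + lam * inner e g \<partial>M x0 I)
        = (\<integral>x. (1-lam) * inner e (batch_grad G {1..n} x) + (norm e)\<^sup>2 \<partial>M x0 I)"
      using ee by (intro Bochner_Integration.integral_cong refl) (simp add: algebra_simps)
    also have "\<dots> = (1 - lam) * A2 x0 I + (norm e)\<^sup>2"
      using j2 by (simp add: A2_def e_def)
    finally have Q: "(\<integral>x. (1-lam) * (inner e (batch_grad G {1..n} x) - inner e (batch_grad G {1..n} x0)) + lam * inner e g \<partial>M x0 I)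
        = (1 - lam) * A2 x0 I + (norm e)\<^sup>2" .
    show ?thesis using c unfolding Q by (simp add: A3_def e_def algebra_simps)
  qed
  note IU = integrable_measure_pmf_finite[OF fin_unif[OF B(2)], unfolded U_def[symmetric]]
  have pw2: "real b * (\<integral>I. A1 x0 I \<partial>U) = - eta * (1 - lam) * real B * (\<integral>I. A2 x0 I \<partial>U) - eta * real B * (\<integral>I. A3 x0 I \<partial>U)"
    if x0: "x0 \<in> set_pmf p" for x0
  proof -
    have "real b * (\<integral>I. A1 x0 I \<partial>U) = (\<integral>I. real b * A1 x0 I \<partial>U)" by simp
    also have "\<dots> = (\<integral>I. - eta * (1 - lam) * real B * A2 x0 I - eta * real B * A3 x0 I \<partial>U)"
      using pw[OF x0] by (intro integral_cong_AE) (auto simp: AE_measure_pmf_iff)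
    also have "\<dots> = - eta * (1 - lam) * real B * (\<integral>I. A2 x0 I \<partial>U) - eta * real B * (\<integral>I. A3 x0 I \<partial>U)"
      by (simp add: IU)
    finally show ?thesis .
  qed
  have k1: "integrable p (\<lambda>x0. \<integral>I. A2 x0 I \<partial>U)" using T2(2) by (simp add: A2_def)
  have k2: "integrable p (\<lambda>x0. \<integral>I. A3 x0 I \<partial>U)" using T3(2) by (simp add: A3_def)
  have "real b * (\<integral>x0. \<integral>I. A1 x0 I \<partial>U \<partial>p) = (\<integral>x0. real b * (\<integral>I. A1 x0 I \<partial>U) \<partial>p)" by simp
  also have "\<dots> = (\<integral>x0. - eta * (1 - lam) * real B * (\<integral>I. A2 x0 I \<partial>U) - eta * real B * (\<integral>I. A3 x0 I \<partial>U) \<partial>p)"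
    using pw2 by (intro integral_cong_AE) (auto simp: AE_measure_pmf_iff)
  also have "\<dots> = - eta * (1 - lam) * real B * (\<integral>x0. \<integral>I. A2 x0 I \<partial>U \<partial>p) - eta * real B * (\<integral>x0. \<integral>I. A3 x0 I \<partial>U \<partial>p)"
    using k1 k2 by simp
  finally show ?thesis
    unfolding ep T1(1) T2(1) T3(1) by (simp add: A1_def A2_def A3_def)
qed


end
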